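(* Let $\mu \colon \mathbb{R}^d\setminus\{0\} \to \mathbb{R}$ be a $C^2$ function, positively homogeneous of degree $m \ge 2$, such that $\det \nabla^2 \mu(x) \ne 0$ whenever $|x|=1$. Then for every $x_0 \in \mathbb{R}^d$ with $|x_0|=1$ there exist an open conic neighbourhood $\Gamma \subset \mathbb{R}^d\setminus\{0\}$ of $x_0$ and a constant $C>0$ such that \[ |\nabla \mu(x)-\nabla \mu(y)| \ge C |x-y|\,(|x|^{m-2}+|y|^{m-2}) \qquad \text{for all } x,y \in \Gamma. \]
   Context: A set $\Gamma\subset\mathbb{R}^d\setminus\{0\}$ is conic if $\lambda x\in\Gamma$ for all $x\in\Gamma$ and $\lambda>0$. *)

theory Defs
  imports "HOL-Analysis.Analysis"
begin

definition conic :: "('a::real_vector) set \<Rightarrow> bool" where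
  "conic \<Gamma> \<longleftrightarrow> \<Gamma> \<subseteq> - {0} \<and> (\<forall>x\<in>\<Gamma>. \<forall>c>0. c *\<^sub>R x \<in> \<Gamma>)"

end

theory Submission
  imports Defs
begin

lemma grad_hom:
  fixes \<mu> :: "real ^ 'n \<Rightarrow> real" and grad :: "real ^ 'n \<Rightarrow> real ^ 'n"
  assumes grad: "\<And>x. x \<noteq> 0 \<Longrightarrow> (\<mu> has_derivative (\<lambda>h. grad x \<bullet> h)) (at x)"
    and hom: "\<And>x t. x \<noteq> 0 \<Longrightarrow> t > 0 \<Longrightarrow> \<mu> (t *\<^sub>R x) = t powr m * \<mu> x"
    and x: "x \<noteq> 0" and t: "t > 0"
  shows "grad (t *\<^sub>R x) = t powr (m - 1) *\<^sub>R grad x"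
proof -
  have tx: "t *\<^sub>R x \<noteq> 0" using x t by simp
  have d1: "((\<lambda>y. \<mu> (t *\<^sub>R y)) has_derivative (\<lambda>h. grad (t *\<^sub>R x) \<bullet> (t *\<^sub>R h))) (at x)"
    by (rule has_derivative_compose[OF has_derivative_scaleR_right[OF has_derivative_ident] grad[OF tx]])
  have d2: "((\<lambda>y. t powr m * \<mu> y) has_derivative (\<lambda>h. t powr m * (grad x \<bullet> h))) (at x)"
    by (rule has_derivative_mult_right[OF grad[OF x]])
  have d3: "((\<lambda>y. \<mu> (t *\<^sub>R y)) has_derivative (\<lambda>h. t powr m * (grad x \<bullet> h))) (at x)"
    by (rule has_derivative_transform_within_open[OF d2, of "-{0}"]) (use x t hom in auto)
  have eq: "(\<lambda>h. grad (t *\<^sub>R x) \<bullet> (t *\<^sub>R h)) = (\<lambda>h. t powr m * (grad x \<bullet> h))"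
    by (rule has_derivative_unique[OF d1 d3])
  define D where "D = t *\<^sub>R grad (t *\<^sub>R x) - t powr m *\<^sub>R grad x"
  have "D \<bullet> D = 0" using fun_cong[OF eq, of D] by (simp add: D_def inner_diff_left algebra_simps)
  then have "D = 0" by simp
  then have e: "t *\<^sub>R grad (t *\<^sub>R x) = t powr m *\<^sub>R grad x" by (simp add: D_def)
  have "grad (t *\<^sub>R x) = (1/t) *\<^sub>R (t *\<^sub>R grad (t *\<^sub>R x))" using t by simp
  also have "\<dots> = (t powr m / t) *\<^sub>R grad x" unfolding e by simp
  also have "t powr m / t = t powr (m - 1)" using t by (simp add: powr_diff)
  finally show ?thesis .
qed

lemma hess_hom:
  fixes grad :: "real ^ 'n \<Rightarrow> real ^ 'n" and hess :: "real ^ 'n \<Rightarrow> real ^ 'n ^ 'n"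
  assumes ghom: "\<And>x t. x \<noteq> 0 \<Longrightarrow> t > 0 \<Longrightarrow> grad (t *\<^sub>R x) = t powr (m - 1) *\<^sub>R grad x"
    and hess: "\<And>x. x \<noteq> 0 \<Longrightarrow> (grad has_derivative (\<lambda>h. hess x *v h)) (at x)"
    and x: "x \<noteq> 0" and t: "t > 0"
  shows "hess (t *\<^sub>R x) *v h = t powr (m - 2) *\<^sub>R (hess x *v h)"
proof -
  have tx: "t *\<^sub>R x \<noteq> 0" using x t by simp
  have d1: "((\<lambda>y. grad (t *\<^sub>R y)) has_derivative (\<lambda>h. hess (t *\<^sub>R x) *v (t *\<^sub>R h))) (at x)"
    by (rule has_derivative_compose[OF has_derivative_scaleR_right[OF has_derivative_ident] hess[OF tx]])
  have d2: "((\<lambda>y. t powr (m - 1) *\<^sub>R grad y) has_derivative (\<lambda>h. t powr (m - 1) *\<^sub>R (hess x *v h))) (at x)"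
    by (rule has_derivative_scaleR_right[OF hess[OF x]])
  have d3: "((\<lambda>y. grad (t *\<^sub>R y)) has_derivative (\<lambda>h. t powr (m - 1) *\<^sub>R (hess x *v h))) (at x)"
    by (rule has_derivative_transform_within_open[OF d2, of "-{0}"]) (use x t ghom in auto)
  have eq: "(\<lambda>h. hess (t *\<^sub>R x) *v (t *\<^sub>R h)) = (\<lambda>h. t powr (m - 1) *\<^sub>R (hess x *v h))"
    by (rule has_derivative_unique[OF d1 d3])
  have "t *\<^sub>R (hess (t *\<^sub>R x) *v h) = t powr (m - 1) *\<^sub>R (hess x *v h)"
    using fun_cong[OF eq, of h] by (simp add: matrix_vector_mult_scaleR)
  then have e: "t *\<^sub>R (hess (t *\<^sub>R x) *v h) = t powr (m - 1) *\<^sub>R (hess x *v h)" .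
  have "hess (t *\<^sub>R x) *v h = (1/t) *\<^sub>R (t *\<^sub>R (hess (t *\<^sub>R x) *v h))" using t by simp
  also have "\<dots> = (t powr (m - 1) / t) *\<^sub>R (hess x *v h)" unfolding e by simp
  also have "t powr (m - 1) / t = t powr (m - 2)" using t by (simp add: powr_diff power2_eq_square)
  finally show ?thesis .
qed

theorem proposition3p3:
  fixes \<mu> :: "real ^ 'n \<Rightarrow> real"
    and grad :: "real ^ 'n \<Rightarrow> real ^ 'n"
    and hess :: "real ^ 'n \<Rightarrow> real ^ 'n ^ 'n"
    and m :: real
  assumes grad: "\<And>x. x \<noteq> 0 \<Longrightarrow> (\<mu> has_derivative (\<lambda>h. grad x \<bullet> h)) (at x)"
    and hess: "\<And>x. x \<noteq> 0 \<Longrightarrow> (grad has_derivative (\<lambda>h. hess x *v h)) (at x)"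
    and hess_cont: "continuous_on (- {0}) hess"
    and hom: "\<And>x t. x \<noteq> 0 \<Longrightarrow> t > 0 \<Longrightarrow> \<mu> (t *\<^sub>R x) = t powr m * \<mu> x"
    and m: "m \<ge> 2"
    and nondeg: "\<And>x. norm x = 1 \<Longrightarrow> det (hess x) \<noteq> 0"
    and x0: "norm x0 = 1"
  shows "\<exists>\<Gamma> C. open \<Gamma> \<and> conic \<Gamma> \<and> x0 \<in> \<Gamma> \<and> C > 0 \<and>
           (\<forall>x\<in>\<Gamma>. \<forall>y\<in>\<Gamma>.
              norm (grad x - grad y) \<ge> C * norm (x - y) * (norm x powr (m - 2) + norm y powr (m - 2)))"
proof -
  have ghom: "\<And>x t. x \<noteq> 0 \<Longrightarrow> t > 0 \<Longrightarrow> grad (t *\<^sub>R x) = t powr (m - 1) *\<^sub>R grad x"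
    by (rule grad_hom[OF grad hom])
  have hhom: "\<And>x t h. x \<noteq> 0 \<Longrightarrow> t > 0 \<Longrightarrow> hess (t *\<^sub>R x) *v h = t powr (m - 2) *\<^sub>R (hess x *v h)"
    by (rule hess_hom[OF ghom hess])
  have x0nz: "x0 \<noteq> 0" using x0 by auto
  define H0 where "H0 = hess x0"
  have "invertible H0" unfolding H0_def using nondeg[OF x0] by (simp add: invertible_det_nz)
  then obtain B where B: "B ** H0 = mat 1" unfolding invertible_def by blast
  obtain KB where KB: "KB > 0" "\<And>v. norm (B *v v) \<le> norm v * KB"
    using bounded_linear.pos_bounded[OF matrix_vector_mul_bounded_linear[of B]] by blast
  define lam where "lam = 1 / KB"
  have lam: "lam > 0" using KB by (simp add: lam_def)
  have H0low: "norm (H0 *v v) \<ge> lam * norm v" for v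
  proof -
    have "norm v = norm (B *v (H0 *v v))" by (simp add: matrix_vector_mul_assoc B)
    also have "\<dots> \<le> norm (H0 *v v) * KB" by (rule KB(2))
    finally show ?thesis using KB by (simp add: lam_def field_simps)
  qed
  define G0 where "G0 = grad x0"
  have G0nz: "G0 \<noteq> 0"
  proof
    assume G0: "G0 = 0"
    have p: "((\<lambda>s::real. x0 + s *\<^sub>R x0) has_derivative (\<lambda>s. s *\<^sub>R x0)) (at 0)"
      by (auto intro!: derivative_eq_intros)
    have h0: "(grad has_derivative (\<lambda>h. hess x0 *v h)) (at (x0 + (0::real) *\<^sub>R x0))"
      using hess[OF x0nz] by simp
    have d1: "((\<lambda>s::real. grad (x0 + s *\<^sub>R x0)) has_derivative (\<lambda>s. hess x0 *v (s *\<^sub>R x0))) (at 0)"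
      by (rule has_derivative_compose[OF p h0])
    have d2: "((\<lambda>s::real. grad (x0 + s *\<^sub>R x0)) has_derivative (\<lambda>s. 0)) (at 0)"
    proof (rule has_derivative_transform_within_open[of "\<lambda>s. 0" "\<lambda>s. 0" 0 UNIV "{s::real. s > -1}"])
      show "((\<lambda>s::real. 0::real^'n) has_derivative (\<lambda>s. 0)) (at 0)" by (rule has_derivative_const)
      show "open {s::real. s > -1}" by (simp add: open_Collect_less)
      show "(0::real) \<in> {s. s > -1}" by simp
      fix s :: real assume "s \<in> {s. s > -1}"
      then have s: "1 + s > 0" by simp
      have "grad (x0 + s *\<^sub>R x0) = grad ((1 + s) *\<^sub>R x0)" by (simp add: algebra_simps)
      also have "\<dots> = 0" using ghom[OF x0nz s] G0 by (simp add: G0_def)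
      finally show "0 = grad (x0 + s *\<^sub>R x0)" by simp
    qed
    have "(\<lambda>s. hess x0 *v (s *\<^sub>R x0)) = (\<lambda>s::real. 0)"
      by (rule has_derivative_unique[OF d1 d2])
    from fun_cong[OF this, of 1] have "H0 *v x0 = 0" by (simp add: H0_def)
    with H0low[of x0] lam x0 show False by simp
  qed
  define A where "A = norm G0"
  have A: "A > 0" using G0nz by (simp add: A_def)
  define eps1 where "eps1 = lam / (2 * real CARD('n) * real CARD('n))"
  have eps1: "eps1 > 0" using lam by (simp add: eps1_def)
  have "isCont hess x0"
    using hess_cont x0nz by (simp add: continuous_on_eq_continuous_at open_Compl)
  then obtain eta1 where eta1: "eta1 > 0" "\<And>u. dist u x0 < eta1 \<Longrightarrow> dist (hess u) H0 < eps1"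
    unfolding continuous_at_eps_delta H0_def using eps1 by blast
  have "isCont grad x0"
    by (rule has_derivative_continuous[OF hess[OF x0nz]])
  then obtain eta2 where eta2: "eta2 > 0" "\<And>u. dist u x0 < eta2 \<Longrightarrow> dist (grad u) G0 < A / 2"
    unfolding continuous_at_eps_delta G0_def using A by (metis half_gt_zero)
  define eta where "eta = min eta1 eta2"
  have eta: "eta > 0" using eta1 eta2 by (simp add: eta_def)
  have hclose: "norm ((hess u - H0) *v v) \<le> lam / 2 * norm v" if "dist u x0 < eta" for u v
  proof -
    have d: "norm (hess u - H0) < eps1" using eta1(2)[of u] that by (simp add: eta_def dist_norm)
    have "onorm ((*v) (hess u - H0)) \<le> real CARD('n) * real CARD('n) * eps1"
    proof (rule onorm_le_matrix_component)
      fix i j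
      have "\<bar>(hess u - H0) $ i $ j\<bar> \<le> norm ((hess u - H0) $ i)" by (rule component_le_norm_cart)
      also have "\<dots> \<le> norm (hess u - H0)" by (rule Finite_Cartesian_Product.norm_nth_le)
      finally show "\<bar>(hess u - H0) $ i $ j\<bar> \<le> eps1" using d by simp
    qed
    also have "\<dots> = lam / 2" by (simp add: eps1_def)
    finally have o: "onorm ((*v) (hess u - H0)) \<le> lam / 2" .
    have "norm ((hess u - H0) *v v) \<le> onorm ((*v) (hess u - H0)) * norm v"
      by (rule onorm[OF matrix_vector_mul_bounded_linear])
    also have "\<dots> \<le> lam / 2 * norm v" by (rule mult_right_mono[OF o norm_ge_zero])
    finally show ?thesis .
  qed
  have gclose: "norm (grad u) > A / 2" "norm (grad u) < 3 * A / 2" if "dist u x0 < eta" for u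
  proof -
    have d: "norm (grad u - G0) < A / 2" using eta2(2)[of u] that by (simp add: eta_def dist_norm)
    have "norm G0 \<le> norm (grad u) + norm (grad u - G0)" using norm_triangle_ineq2[of G0 "grad u"] norm_minus_commute[of G0 "grad u"] by linarith
    then show "norm (grad u) > A / 2" using d by (simp add: A_def)
    have "norm (grad u) \<le> norm G0 + norm (grad u - G0)" using norm_triangle_ineq2[of "grad u" G0] by linarith
    then show "norm (grad u) < 3 * A / 2" using d by (simp add: A_def)
  qed
  define \<delta> where "\<delta> = min (eta / 3) 1"
  have \<delta>: "\<delta> > 0" "\<delta> \<le> 1" "2 * \<delta> < eta" using eta by (auto simp: \<delta>_def)
  define \<Gamma> where "\<Gamma> = {x. 0 < x0 \<bullet> x \<and> norm (x - (x0 \<bullet> x) *\<^sub>R x0) < \<delta> * (x0 \<bullet> x)}"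

  have Gin: "0 < x0 \<bullet> z" "norm (z - (x0 \<bullet> z) *\<^sub>R x0) < \<delta> * (x0 \<bullet> z)" if "z \<in> \<Gamma>" for z
    using that by (auto simp: \<Gamma>_def)
  have zprops: "z \<noteq> 0" "x0 \<bullet> z \<le> norm z" "norm z \<le> 2 * (x0 \<bullet> z)"
     "dist (z /\<^sub>R norm z) x0 < eta" if "z \<in> \<Gamma>" for z
  proof -
    define a where "a = x0 \<bullet> z"
    have a: "a > 0" and na: "norm (z - a *\<^sub>R x0) < \<delta> * a" using Gin[OF that] by (auto simp: a_def)
    show "x0 \<bullet> z \<le> norm z" using Cauchy_Schwarz_ineq2[of x0 z] x0 by simp
    then have an: "a \<le> norm z" by (simp add: a_def)
    show "z \<noteq> 0"
    proof
      assume "z = 0" then have "a = 0" by (simp add: a_def)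
      then show False using a by simp
    qed
    have "norm z \<le> norm (a *\<^sub>R x0) + norm (z - a *\<^sub>R x0)" using norm_triangle_ineq2[of z "a *\<^sub>R x0"] by linarith
    then have nz: "norm z < a + \<delta> * a" using na a x0 by simp
    then show "norm z \<le> 2 * (x0 \<bullet> z)" using \<delta> a
      by (simp add: a_def) (smt (verit) mult_left_le_one_le)
    have npos: "norm z > 0" using an a by linarith
    have eq: "z /\<^sub>R norm z - x0 = (1 / norm z - 1 / a) *\<^sub>R z + (1 / a) *\<^sub>R (z - a *\<^sub>R x0)"
      using a by (simp add: algebra_simps divide_inverse)
    have "norm (z /\<^sub>R norm z - x0) \<le> norm ((1 / norm z - 1 / a) *\<^sub>R z) + norm ((1 / a) *\<^sub>R (z - a *\<^sub>R x0))"
      unfolding eq by (rule norm_triangle_ineq)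
    also have "norm ((1 / norm z - 1 / a) *\<^sub>R z) = (1 / a - 1 / norm z) * norm z"
      using an a npos by (simp add: frac_le)
    also have "\<dots> = norm z / a - 1" using npos a by (simp add: field_simps)
    also have "norm ((1 / a) *\<^sub>R (z - a *\<^sub>R x0)) = norm (z - a *\<^sub>R x0) / a" using a by simp
    finally have "norm (z /\<^sub>R norm z - x0) \<le> norm z / a - 1 + norm (z - a *\<^sub>R x0) / a" .
    moreover have "norm z / a < 1 + \<delta>" using nz a by (simp add: field_simps)
    moreover have "norm (z - a *\<^sub>R x0) / a < \<delta>" using na a by (simp add: field_simps)
    ultimately show "dist (z /\<^sub>R norm z) x0 < eta" using \<delta> by (simp add: dist_norm)
  qed
  have seg: "y + s *\<^sub>R (x - y) \<in> \<Gamma>" if "x \<in> \<Gamma>" "y \<in> \<Gamma>" "0 \<le> s" "s \<le> 1" for x y s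
  proof -
    have e: "y + s *\<^sub>R (x - y) = (1 - s) *\<^sub>R y + s *\<^sub>R x" by (simp add: algebra_simps)
    have i: "x0 \<bullet> (y + s *\<^sub>R (x - y)) = (1 - s) * (x0 \<bullet> y) + s * (x0 \<bullet> x)"
      unfolding e by (simp add: inner_add_right)
    have pos: "0 < (1 - s) * (x0 \<bullet> y) + s * (x0 \<bullet> x)"
      using Gin[OF that(1)] Gin[OF that(2)] that(3,4)
      by (cases "s = 0") (auto intro: add_nonneg_pos add_pos_nonneg)
    have e2: "y + s *\<^sub>R (x - y) - (x0 \<bullet> (y + s *\<^sub>R (x - y))) *\<^sub>R x0
        = (1 - s) *\<^sub>R (y - (x0 \<bullet> y) *\<^sub>R x0) + s *\<^sub>R (x - (x0 \<bullet> x) *\<^sub>R x0)"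
      unfolding i by (simp add: algebra_simps)
    have "norm (y + s *\<^sub>R (x - y) - (x0 \<bullet> (y + s *\<^sub>R (x - y))) *\<^sub>R x0)
        \<le> (1 - s) * norm (y - (x0 \<bullet> y) *\<^sub>R x0) + s * norm (x - (x0 \<bullet> x) *\<^sub>R x0)"
      unfolding e2 using that(3,4) by (metis (no_types, lifting) abs_of_nonneg diff_ge_0_iff_ge norm_scaleR norm_triangle_ineq)
    also have "\<dots> < (1 - s) * (\<delta> * (x0 \<bullet> y)) + s * (\<delta> * (x0 \<bullet> x))"
    proof (cases "s = 0")
      case True then show ?thesis using Gin[OF that(2)] by simp
    next
      case False
      then have "s > 0" using that by simp
      then have "s * norm (x - (x0 \<bullet> x) *\<^sub>R x0) < s * (\<delta> * (x0 \<bullet> x))"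
        using Gin[OF that(1)] by simp
      moreover have "(1 - s) * norm (y - (x0 \<bullet> y) *\<^sub>R x0) \<le> (1 - s) * (\<delta> * (x0 \<bullet> y))"
        using Gin[OF that(2)] that(4) by (intro mult_left_mono) auto
      ultimately show ?thesis by linarith
    qed
    also have "\<dots> = \<delta> * (x0 \<bullet> (y + s *\<^sub>R (x - y)))" unfolding i by (simp add: algebra_simps)
    finally show ?thesis using pos i by (simp add: \<Gamma>_def)
  qed
  have openG: "open \<Gamma>" unfolding \<Gamma>_def
    by (intro open_Collect_conj open_Collect_less continuous_intros)
  have conicG: "conic \<Gamma>" unfolding conic_def
  proof (intro conjI ballI allI impI)
    show "\<Gamma> \<subseteq> - {0}" using zprops(1) by auto
  next
    fix x and c :: real assume x: "x \<in> \<Gamma>" and c: "c > 0"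
    have "c *\<^sub>R x - (x0 \<bullet> (c *\<^sub>R x)) *\<^sub>R x0 = c *\<^sub>R (x - (x0 \<bullet> x) *\<^sub>R x0)" by (simp add: algebra_simps)
    then show "c *\<^sub>R x \<in> \<Gamma>" using Gin[OF x] c by (simp add: \<Gamma>_def)
  qed
  have x0G: "x0 \<in> \<Gamma>" using x0 \<delta> by (simp add: \<Gamma>_def inner_commute[of x0] dot_square_norm)
  define C where "C = min (A / 16) (lam / 4 / 12 powr (m - 2))"
  have Cpos: "C > 0" using A lam by (simp add: C_def)
  have C1: "C \<le> A / 16" and C2: "C \<le> lam / 4 / 12 powr (m - 2)" by (simp_all add: C_def)
  have ord: "norm (grad x - grad y) \<ge> C * norm (x - y) * (norm x powr (m - 2) + norm y powr (m - 2))"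
    if xG: "x \<in> \<Gamma>" and yG: "y \<in> \<Gamma>" and le: "norm y \<le> norm x" for x y
  proof -
    define nx where "nx = norm x"
    define ny where "ny = norm y"
    define px where "px = nx powr (m - 2)"
    define py where "py = ny powr (m - 2)"
    have xnz: "x \<noteq> 0" and ynz: "y \<noteq> 0" using zprops(1) xG yG by auto
    have nx: "nx > 0" and ny: "ny > 0" using xnz ynz by (auto simp: nx_def ny_def)
    have nyx: "ny \<le> nx" using le by (simp add: nx_def ny_def)
    have pyx: "py \<le> px" unfolding px_def py_def using m ny nyx by (intro powr_mono2) auto
    have px: "px > 0" using nx by (simp add: px_def)
    have sum: "px + py \<le> 2 * px" using pyx by simp
    have sum0: "0 \<le> px + py" using px pyx by (simp add: py_def)
    have Q: "nx powr (m - 1) = nx * px"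
    proof -
      have "nx powr (m - 1) = nx powr (1 + (m - 2))" by simp
      also have "\<dots> = nx powr 1 * nx powr (m - 2)" by (rule powr_add)
      also have "\<dots> = nx * px" using nx by (simp add: px_def)
      finally show ?thesis .
    qed
    show ?thesis
    proof (cases "6 * ny \<le> nx")
      case True
      define xh where "xh = x /\<^sub>R nx"
      define yh where "yh = y /\<^sub>R ny"
      have xh: "xh \<noteq> 0" "x = nx *\<^sub>R xh" using nx xnz by (auto simp: xh_def)
      have yh: "yh \<noteq> 0" "y = ny *\<^sub>R yh" using ny ynz by (auto simp: yh_def)
      have dxh: "dist xh x0 < eta" using zprops(4)[OF xG] by (simp add: xh_def nx_def)
      have dyh: "dist yh x0 < eta" using zprops(4)[OF yG] by (simp add: yh_def ny_def)
      have gx: "norm (grad x) = nx powr (m - 1) * norm (grad xh)"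
        using ghom[OF xh(1) nx] xh(2) by simp
      have gy: "norm (grad y) = ny powr (m - 1) * norm (grad yh)"
        using ghom[OF yh(1) ny] yh(2) by simp
      have "nx powr (m - 1) * (A / 2) \<le> norm (grad x)"
        unfolding gx using gclose(1)[OF dxh] by (intro mult_left_mono) auto
      have p6: "6 powr (m - 1) \<ge> 6"
        using powr_mono[of 1 "m - 1" 6] m by simp
      have "ny powr (m - 1) \<le> (nx / 6) powr (m - 1)"
        using True ny m by (intro powr_mono2) auto
      also have "\<dots> = nx powr (m - 1) / 6 powr (m - 1)" by (simp add: powr_divide)
      also have "\<dots> \<le> nx powr (m - 1) / 6"
        using p6 by (intro divide_left_mono) auto
      finally have nyp: "ny powr (m - 1) \<le> nx powr (m - 1) / 6" .
      have "norm (grad y) \<le> ny powr (m - 1) * (3 * A / 2)"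
        unfolding gy using gclose(2)[OF dyh] by (intro mult_left_mono) auto
      also have "\<dots> \<le> nx powr (m - 1) / 6 * (3 * A / 2)"
        using nyp A by (intro mult_right_mono) auto
      finally have gyb: "norm (grad y) \<le> nx powr (m - 1) / 6 * (3 * A / 2)" .
      have "norm (grad x) - norm (grad y) \<le> norm (grad x - grad y)" by (rule norm_triangle_ineq2)
      moreover have "nx powr (m - 1) / 6 * (3 * A / 2) = (nx powr (m - 1) * A) / 4" by simp
      moreover have "nx powr (m - 1) * (A / 2) = (nx powr (m - 1) * A) / 2" by simp
      moreover have "nx powr (m - 1) * (A / 4) = (nx powr (m - 1) * A) / 4" by simp
      ultimately have L: "nx powr (m - 1) * (A / 4) \<le> norm (grad x - grad y)"
        using gyb \<open>nx powr (m - 1) * (A / 2) \<le> norm (grad x)\<close> by linarith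
      have nxy: "norm (x - y) \<le> 2 * nx"
        using norm_triangle_ineq4[of x y] nyx by (simp add: nx_def ny_def)
      have "C * norm (x - y) * (px + py) \<le> (A / 16) * (2 * nx) * (2 * px)"
        using C1 Cpos nxy sum sum0 A nx by (intro mult_mono) auto
      also have "\<dots> = nx powr (m - 1) * (A / 4)" unfolding Q by simp
      finally show ?thesis using L by (simp add: px_def py_def nx_def ny_def)
    next
      case False
      show ?thesis
      proof (cases "x = y")
        case True then show ?thesis by simp
      next
        case xy: False
        define v where "v = x - y"
        have vnz: "v \<noteq> 0" using xy by (simp add: v_def)
        define Hv where "Hv = H0 *v v"
        have Hv: "norm Hv \<ge> lam * norm v" using H0low by (simp add: Hv_def)
        have "lam * norm v > 0" using lam vnz by simp
        then have Hvpos: "norm Hv > 0" using Hv by linarith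
        define w where "w = (1 / norm Hv) *\<^sub>R Hv"
        have nw: "norm w = 1" using Hvpos by (simp add: w_def)
        have wHv: "w \<bullet> Hv = norm Hv" using Hvpos
          by (simp add: w_def power2_eq_square dot_square_norm)
        define z where "z = (\<lambda>s. y + s *\<^sub>R v)"
        have zG: "z s \<in> \<Gamma>" if "0 \<le> s" "s \<le> 1" for s
          using seg[OF xG yG that] by (simp add: z_def v_def)
        have der: "((\<lambda>s. w \<bullet> grad (z s)) has_derivative (\<lambda>h. w \<bullet> (hess (z s) *v (h *\<^sub>R v)))) (at s within {0..1})"
          if "0 \<le> s" "s \<le> 1" for s
        proof -
          have p: "(z has_derivative (\<lambda>h. h *\<^sub>R v)) (at s)"
            unfolding z_def by (auto intro!: derivative_eq_intros)
          have zn: "z s \<noteq> 0" using zG[OF that] zprops(1) by blast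
          have "((\<lambda>s. grad (z s)) has_derivative (\<lambda>h. hess (z s) *v (h *\<^sub>R v))) (at s)"
            by (rule has_derivative_compose[OF p hess[OF zn]])
          then have "((\<lambda>s. w \<bullet> grad (z s)) has_derivative (\<lambda>h. w \<bullet> (hess (z s) *v (h *\<^sub>R v)))) (at s)"
            by (rule bounded_linear.has_derivative[OF bounded_linear_inner_right])
          then show ?thesis by (rule has_derivative_subset) auto
        qed
        obtain \<xi> where \<xi>: "\<xi> \<in> {0..1}"
          and mv: "w \<bullet> grad (z 1) - w \<bullet> grad (z 0) = w \<bullet> (hess (z \<xi>) *v ((1 - 0) *\<^sub>R v))"
          using mvt_very_simple[of 0 1 "\<lambda>s. w \<bullet> grad (z s)", OF _ der] by auto
        have "w \<bullet> grad (z 1) - w \<bullet> grad (z 0) = w \<bullet> (grad x - grad y)"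
          by (simp add: z_def v_def inner_diff_right)
        also have "\<dots> \<le> norm w * norm (grad x - grad y)"
          using Cauchy_Schwarz_ineq2[of w "grad x - grad y"] by simp
        finally have LHS: "w \<bullet> (hess (z \<xi>) *v v) \<le> norm (grad x - grad y)" using mv nw by simp
        define zz where "zz = z \<xi>"
        have zzG: "zz \<in> \<Gamma>" using zG \<xi> by (simp add: zz_def)
        define nz where "nz = norm zz"
        define zh where "zh = zz /\<^sub>R nz"
        have zzn: "zz \<noteq> 0" using zzG zprops(1) by blast
        have nzp: "nz > 0" using zzn by (simp add: nz_def)
        have zh: "zh \<noteq> 0" "zz = nz *\<^sub>R zh" using nzp zzn by (auto simp: zh_def)
        have dzh: "dist zh x0 < eta" using zprops(4)[OF zzG] by (simp add: zh_def nz_def)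
        have hz: "hess zz *v v = nz powr (m - 2) *\<^sub>R (hess zh *v v)"
          using hhom[OF zh(1) nzp] zh(2) by simp
        have "w \<bullet> (hess zh *v v) = w \<bullet> Hv + w \<bullet> ((hess zh - H0) *v v)"
          by (simp add: Hv_def matrix_vector_mult_diff_rdistrib inner_diff_right)
        also have "w \<bullet> ((hess zh - H0) *v v) \<ge> - norm ((hess zh - H0) *v v)"
          using Cauchy_Schwarz_ineq2[of w "(hess zh - H0) *v v"] nw by simp
        then have "w \<bullet> Hv + w \<bullet> ((hess zh - H0) *v v) \<ge> lam / 2 * norm v"
          using wHv Hv hclose[OF dzh, of v] by simp
        finally have inner_lb: "w \<bullet> (hess zh *v v) \<ge> lam / 2 * norm v" .
        have "x0 \<bullet> zz = (1 - \<xi>) * (x0 \<bullet> y) + \<xi> * (x0 \<bullet> x)"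
          by (simp add: zz_def z_def v_def algebra_simps inner_add_right inner_diff_right)
        moreover have y2: "x0 \<bullet> y \<ge> ny / 2" using zprops(3)[OF yG] by (simp add: ny_def)
        moreover have x2: "x0 \<bullet> x \<ge> ny / 2" using zprops(3)[OF xG] nyx by (simp add: nx_def)
        moreover have "(1 - \<xi>) * (x0 \<bullet> y) \<ge> (1 - \<xi>) * (ny / 2)"
          using \<xi> y2 by (intro mult_left_mono) auto
        moreover have "\<xi> * (x0 \<bullet> x) \<ge> \<xi> * (ny / 2)"
          using \<xi> x2 by (intro mult_left_mono) auto
        moreover have "(1 - \<xi>) * (ny / 2) + \<xi> * (ny / 2) = ny / 2" by (simp add: field_simps)
        ultimately have "x0 \<bullet> zz \<ge> ny / 2" by linarith
        then have "nz \<ge> ny / 2" using zprops(2)[OF zzG] by (simp add: nz_def)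
        then have nzb: "nz \<ge> nx / 12" using False by simp
        have "nz powr (m - 2) \<ge> (nx / 12) powr (m - 2)"
          using nzb nx m by (intro powr_mono2) auto
        then have nzp2: "nz powr (m - 2) \<ge> px / 12 powr (m - 2)"
          by (simp add: powr_divide px_def)
        have "px / 12 powr (m - 2) * (lam / 2 * norm v) \<le> nz powr (m - 2) * (w \<bullet> (hess zh *v v))"
          using nzp2 inner_lb lam px by (intro mult_mono) auto
        also have "\<dots> = w \<bullet> (hess zz *v v)" unfolding hz by simp
        finally have L: "px / 12 powr (m - 2) * (lam / 2 * norm v) \<le> norm (grad x - grad y)"
          using LHS by (simp add: zz_def)
        have "C * norm v * (px + py) \<le> (lam / 4 / 12 powr (m - 2)) * norm v * (2 * px)"
          using C2 Cpos sum sum0 lam by (intro mult_mono) auto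
        also have "\<dots> = px / 12 powr (m - 2) * (lam / 2 * norm v)" by (simp add: ac_simps)
        finally show ?thesis using L by (simp add: px_def py_def nx_def ny_def v_def)
      qed
    qed
  qed
  have "\<forall>x\<in>\<Gamma>. \<forall>y\<in>\<Gamma>.
          norm (grad x - grad y) \<ge> C * norm (x - y) * (norm x powr (m - 2) + norm y powr (m - 2))"
  proof (intro ballI)
    fix x y assume "x \<in> \<Gamma>" "y \<in> \<Gamma>"
    show "norm (grad x - grad y) \<ge> C * norm (x - y) * (norm x powr (m - 2) + norm y powr (m - 2))"
    proof (cases "norm y \<le> norm x")
      case True then show ?thesis using ord \<open>x \<in> \<Gamma>\<close> \<open>y \<in> \<Gamma>\<close> by blast
    next
      case False
      then have "norm x \<le> norm y" by simp
      from ord[OF \<open>y \<in> \<Gamma>\<close> \<open>x \<in> \<Gamma>\<close> this] show ?thesis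
        by (simp add: norm_minus_commute add.commute)
    qed
  qed
  then show ?thesis using openG conicG x0G Cpos by blast
qed

end
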